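(* For every rigid sequence $(r_n)$ there exists a linear correlation, i.e. a sequence $a(n)=\int_Xf_0(T^{c_0n}x)\cdots f_k(T^{c_kn}x)\,d\mu(x)$ for some invertible measure preserving system $(X,\mu,T)$, $f_j\in L^\infty(\mu)$ and $c_j\in\mathbb{Z}$, whose null component is not null along $(r_n)$.
   Context: An increasing sequence of integers $(r_n)$ is rigid if there is a weakly mixing system $(X,\mu,T)$ with $\|f\circ T^{r_n}-f\|_{L^2(\mu)}\to0$ for all $f\in L^2(\mu)$. Nilsequences: uniform limits of sequences $n\mapsto f(\tau^nx)$ with $X=G/\Gamma$ a nilmanifold ($G$ nilpotent Lie group, $\Gamma$ discrete cocompact), $\tau\in G$, $x\in X$, $f\in C(X)$. A bounded sequence $b$ is null along $(r_n)$ if $\frac1N\sum_{n=1}^N|b(r_n)|\to0$, and null if this holds for $r_n=n$. Every linear correlation admits a unique decomposition as a nilsequence plus a null sequence; the latter is its null component. *)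

theory Defs
  imports "HOL-Analysis.Analysis" "HOL-Probability.Probability" "HOL-Algebra.Algebra"
begin

definition invertible_mps :: "'a measure \<Rightarrow> ('a \<Rightarrow> 'a) \<Rightarrow> bool" where
  "invertible_mps M T \<longleftrightarrow>
     prob_space M \<and> T \<in> M \<rightarrow>\<^sub>M M \<and> distr M M T = M \<and>
     bij_betw T (space M) (space M) \<and> inv_into (space M) T \<in> M \<rightarrow>\<^sub>M M"

definition tpow :: "'a set \<Rightarrow> ('a \<Rightarrow> 'a) \<Rightarrow> int \<Rightarrow> 'a \<Rightarrow> 'a" where
  "tpow S T k = (if 0 \<le> k then T ^^ nat k else (inv_into S T) ^^ nat (- k))"

definition L2fun :: "'a measure \<Rightarrow> ('a \<Rightarrow> complex) \<Rightarrow> bool" where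
  "L2fun M f \<longleftrightarrow> f \<in> borel_measurable M \<and> integrable M (\<lambda>x. (cmod (f x))^2)"

definition L2norm :: "'a measure \<Rightarrow> ('a \<Rightarrow> complex) \<Rightarrow> real" where
  "L2norm M f = sqrt (LINT x|M. (cmod (f x))^2)"

definition Linfty_fun :: "'a measure \<Rightarrow> ('a \<Rightarrow> complex) \<Rightarrow> bool" where
  "Linfty_fun M f \<longleftrightarrow> f \<in> borel_measurable M \<and> (\<exists>B. AE x in M. cmod (f x) \<le> B)"

definition weakly_mixing :: "'a measure \<Rightarrow> ('a \<Rightarrow> 'a) \<Rightarrow> bool" where
  "weakly_mixing M T \<longleftrightarrow>
     (\<forall>f g. L2fun M f \<longrightarrow> L2fun M g \<longrightarrow>
        (\<lambda>N. (\<Sum>n<N. cmod ((LINT x|M. f ((T ^^ n) x) * cnj (g x))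
                              - (LINT x|M. f x) * cnj (LINT x|M. g x))) / real N)
        \<longlonglongrightarrow> 0)"

definition nontrivial_space :: "'a measure \<Rightarrow> bool" where
  "nontrivial_space M \<longleftrightarrow> (\<exists>A\<in>sets M. 0 < measure M A \<and> measure M A < 1)"

definition rigid_along :: "'a measure \<Rightarrow> ('a \<Rightarrow> 'a) \<Rightarrow> (nat \<Rightarrow> nat) \<Rightarrow> bool" where
  "rigid_along M T r \<longleftrightarrow>
     (\<forall>f. L2fun M f \<longrightarrow> (\<lambda>n. L2norm M (\<lambda>x. f ((T ^^ r n) x) - f x)) \<longlonglongrightarrow> 0)"

definition linear_correlation :: "'a measure \<Rightarrow> ('a \<Rightarrow> 'a) \<Rightarrow> (nat \<Rightarrow> complex) \<Rightarrow> bool" where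
  "linear_correlation M T a \<longleftrightarrow>
     (\<exists>(k::nat) (f::nat \<Rightarrow> 'a \<Rightarrow> complex) (c::nat \<Rightarrow> int).
        (\<forall>j\<le>k. Linfty_fun M (f j)) \<and>
        (\<forall>n. a n = (LINT x|M. (\<Prod>j\<le>k. f j (tpow (space M) T (c j * int n) x)))))"

definition null_seq :: "(nat \<Rightarrow> complex) \<Rightarrow> bool" where
  "null_seq b \<longleftrightarrow> (\<lambda>N. (\<Sum>n=1..N. cmod (b n)) / real N) \<longlonglongrightarrow> 0"

definition null_along :: "(nat \<Rightarrow> nat) \<Rightarrow> (nat \<Rightarrow> complex) \<Rightarrow> bool" where
  "null_along r b \<longleftrightarrow> (\<lambda>N. (\<Sum>n=1..N. cmod (b (r n))) / real N) \<longlonglongrightarrow> 0"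

primrec lower_central :: "('g, 'b) monoid_scheme \<Rightarrow> nat \<Rightarrow> 'g set" where
  "lower_central G 0 = carrier G"
| "lower_central G (Suc i) =
     generate G {mult G (mult G (mult G x y) (m_inv G x)) (m_inv G y) | x y.
                   x \<in> carrier G \<and> y \<in> lower_central G i}"

definition nilpotent_group :: "('g, 'b) monoid_scheme \<Rightarrow> bool" where
  "nilpotent_group G \<longleftrightarrow> group G \<and> (\<exists>s. lower_central G s = {one G})"

definition topological_group :: "('g, 'b) monoid_scheme \<Rightarrow> 'g topology \<Rightarrow> bool" where
  "topological_group G \<tau> \<longleftrightarrow>
     group G \<and> topspace \<tau> = carrier G \<and> Hausdorff_space \<tau> \<and>
     continuous_map (prod_topology \<tau> \<tau>) \<tau> (\<lambda>(x, y). mult G x y) \<and>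
     continuous_map \<tau> \<tau> (m_inv G)"

definition locally_euclidean :: "'g topology \<Rightarrow> bool" where
  "locally_euclidean \<tau> \<longleftrightarrow>
     (\<exists>d. \<forall>x\<in>topspace \<tau>. \<exists>U. openin \<tau> U \<and> x \<in> U \<and>
        (\<exists>V. openin (Euclidean_space d) V \<and>
             subtopology \<tau> U homeomorphic_space subtopology (Euclidean_space d) V))"

text \<open>Lie groups, as locally Euclidean Hausdorff topological groups (these carry a
  unique compatible real-analytic Lie group structure, Gleason--Montgomery--Zippin).\<close>
definition lie_group :: "('g, 'b) monoid_scheme \<Rightarrow> 'g topology \<Rightarrow> bool" where
  "lie_group G \<tau> \<longleftrightarrow> topological_group G \<tau> \<and> locally_euclidean \<tau>"

text \<open>The group elements are represented inside the type real,
  which is no loss of generality since Lie groups have cardinality at most continuum.\<close>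
definition basic_nilsequence :: "(nat \<Rightarrow> complex) \<Rightarrow> bool" where
  "basic_nilsequence \<phi> \<longleftrightarrow>
     (\<exists>(G::real monoid) (\<sigma>::real topology) (\<Gamma>::real set) (Xt::real set topology)
        (F::real set \<Rightarrow> complex) (g::real) (x0::real set).
        nilpotent_group G \<and> lie_group G \<sigma> \<and> subgroup \<Gamma> G \<and>
        subtopology \<sigma> \<Gamma> = discrete_topology \<Gamma> \<and>
        quotient_map \<sigma> Xt (\<lambda>h. l_coset G h \<Gamma>) \<and> compact_space Xt \<and>
        g \<in> carrier G \<and> x0 \<in> topspace Xt \<and> continuous_map Xt euclidean F \<and>
        (\<forall>n. \<phi> n = F (l_coset G (pow G g n) x0)))"

definition nilsequence :: "(nat \<Rightarrow> complex) \<Rightarrow> bool" where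
  "nilsequence \<psi> \<longleftrightarrow>
     (\<forall>\<epsilon>>0. \<exists>\<phi>. basic_nilsequence \<phi> \<and> (\<forall>n. cmod (\<psi> n - \<phi> n) < \<epsilon>))"

end

theory Submission
  imports Defs
begin

lemma prod_atMost_1: "(\<Prod>j\<le>(1::nat). h j) = (h 0 * h 1 :: complex)"
  by (simp add: atMost_Suc)


lemma sing_homeo: "discrete_topology {a} homeomorphic_space discrete_topology {b}"
  unfolding homeomorphic_space_def
  by (rule exI[of _ "\<lambda>_. b"], rule exI[of _ "\<lambda>_. a"]) (auto simp: homeomorphic_maps_def)

lemma basic_nil_zero: "basic_nilsequence (\<lambda>_. 0)"
proof -
  define G :: "real monoid" where "G = \<lparr>carrier = {0}, mult = (\<lambda>x y. 0), one = 0\<rparr>"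
  define \<sigma> :: "real topology" where "\<sigma> = discrete_topology {0}"
  define Xt :: "real set topology" where "Xt = discrete_topology {{0}}"
  have grp: "group G"
    by (rule groupI) (auto simp: G_def)
  have inv: "m_inv G x = 0" if "x = 0" for x
    using group.inv_closed[OF grp, of x] that by (simp add: G_def)
  have nil: "nilpotent_group G"
    unfolding nilpotent_group_def using grp by (auto intro!: exI[of _ 0] simp: G_def)
  have cm: "continuous_map (prod_topology \<sigma> \<sigma>) \<sigma> (\<lambda>(x, y). mult G x y)"
  proof -
    have "(\<lambda>(x::real, y::real). mult G x y) = (\<lambda>_. 0)" by (auto simp: G_def)
    then show ?thesis by (simp add: \<sigma>_def)
  qed
  have ci: "continuous_map \<sigma> \<sigma> (m_inv G)"
    unfolding \<sigma>_def using inv by auto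
  have tg: "topological_group G \<sigma>"
    unfolding topological_group_def using grp cm ci by (auto simp: \<sigma>_def G_def)
  have le: "locally_euclidean \<sigma>"
    unfolding locally_euclidean_def
  proof (rule exI[where x="0::nat"], rule ballI)
    fix x assume "x \<in> topspace \<sigma>"
    then have x: "x = 0" by (simp add: \<sigma>_def)
    have tE: "topspace (Euclidean_space 0) = {\<lambda>_. 0}"
      by (auto simp: topspace_Euclidean_space)
    show "\<exists>U. openin \<sigma> U \<and> x \<in> U \<and> (\<exists>V. openin (Euclidean_space 0) V \<and>
             subtopology \<sigma> U homeomorphic_space subtopology (Euclidean_space 0) V)"
    proof (intro exI[of _ "{0}"] conjI exI[of _ "topspace (Euclidean_space 0)"])
      show "openin \<sigma> {0}" by (simp add: \<sigma>_def)
      show "x \<in> {0}" using x by simp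
      show "openin (Euclidean_space 0) (topspace (Euclidean_space 0))" by simp
      have "subtopology \<sigma> {0} = discrete_topology {0::real}"
        by (simp add: \<sigma>_def)
      moreover have "subtopology (Euclidean_space 0) (topspace (Euclidean_space 0)) = discrete_topology {\<lambda>_. 0}"
        by (simp add: subtopology_eq_discrete_topology_sing tE)
      ultimately show "subtopology \<sigma> {0} homeomorphic_space subtopology (Euclidean_space 0) (topspace (Euclidean_space 0))"
        by (simp add: sing_homeo)
    qed
  qed
  have coset: "l_coset G h {0} = {0}" for h
    by (auto simp: l_coset_def G_def)
  have qm: "quotient_map \<sigma> Xt (\<lambda>h. l_coset G h {0})"
    unfolding quotient_map_def \<sigma>_def Xt_def coset by auto
  show ?thesis
    unfolding basic_nilsequence_def
    apply (rule exI[of _ G], rule exI[of _ \<sigma>], rule exI[of _ "{0}"], rule exI[of _ Xt],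
           rule exI[of _ "\<lambda>_. 0"], rule exI[of _ 0], rule exI[of _ "{0}"])
    using nil tg le qm inv[of 0, unfolded G_def]
    by (auto simp: compact_space_discrete_topology lie_group_def subgroup_def G_def \<sigma>_def Xt_def)
qed

lemma nilsequence_zero: "nilsequence (\<lambda>_. 0)"
  unfolding nilsequence_def using basic_nil_zero by (auto intro!: exI[of _ "\<lambda>_. 0"])



theorem proposition1p6:
  fixes M :: "'a measure" and T :: "'a \<Rightarrow> 'a" and r :: "nat \<Rightarrow> nat"
  assumes "strict_mono r"
    and "invertible_mps M T" and "nontrivial_space M" and "weakly_mixing M T"
    and "rigid_along M T r"
  shows "\<exists>(M'::'a measure) T' a. invertible_mps M' T' \<and> linear_correlation M' T' a \<and>
           (\<exists>\<psi> b. nilsequence \<psi> \<and> null_seq b \<and> (\<forall>n. a n = \<psi> n + b n) \<and>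
                  \<not> null_along r b)"
proof -
  from assms(2) have ps: "prob_space M" and Tm: "T \<in> M \<rightarrow>\<^sub>M M" and dT: "distr M M T = M"
    unfolding invertible_mps_def by auto
  interpret prob_space M by fact
  have Tn: "(T^^n) \<in> M \<rightarrow>\<^sub>M M" for n
    by (induction n) (auto intro: measurable_compose[OF _ Tm] measurable_ident_sets)
  have dTn: "distr M M (T^^n) = M" for n
  proof (induction n)
    case 0 then show ?case by (simp add: id_def)
  next
    case (Suc n)
    have "distr M M (T^^Suc n) = distr (distr M M (T^^n)) M T"
      using distr_distr[OF Tm Tn[of n]] by simp
    also have "\<dots> = M" using Suc dT by simp
    finally show ?case .
  qed
  have intT: "integral\<^sup>L M (\<lambda>x. h ((T^^n) x)) = integral\<^sup>L M h" if "h \<in> borel_measurable M" for h :: "'a \<Rightarrow> real" and n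
    using integral_distr[OF Tn that] dTn by simp
  have bint: "integrable M h" if "h \<in> borel_measurable M" "\<And>x. \<bar>h x\<bar> \<le> 1" for h :: "'a \<Rightarrow> real"
    by (rule integrable_const_bound[where B=1]) (use that in auto)
  from assms(3) obtain A where A: "A \<in> sets M" "0 < prob A" "prob A < 1"
    unfolding nontrivial_space_def by auto
  define p where "p = prob A"
  define g where "g x = indicator A x - p" for x
  have gm: "g \<in> borel_measurable M" unfolding g_def using A by simp
  have gb: "\<bar>g x\<bar> \<le> 1" for x using A unfolding g_def p_def by (auto simp: indicator_def)
  define \<rho> where "\<rho> n = (LINT x|M. g((T^^n) x) * g x)" for n
  have gTm: "(\<lambda>x. g((T^^n) x)) \<in> borel_measurable M" for n
    using measurable_compose[OF Tn gm] .
  have gTb: "\<bar>g((T^^n) x) * g x\<bar> \<le> 1" for n x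
    using gb[of "(T^^n) x"] gb[of x] by (simp add: abs_mult mult_le_one)
  have int_prod: "integrable M (\<lambda>x. g((T^^n) x) * g x)" for n
    by (intro bint borel_measurable_times gTm gm gTb)
  have \<rho>b: "\<bar>\<rho> n\<bar> \<le> 1" for n
  proof -
    have "\<bar>\<rho> n\<bar> \<le> (LINT x|M. \<bar>g((T^^n) x) * g x\<bar>)"
      unfolding \<rho>_def by (rule integral_abs_bound)
    also have "\<dots> \<le> (LINT x|M. 1)"
      by (rule integral_mono) (use int_prod gTb in auto)
    also have "\<dots> = 1" by (simp add: prob_space)
    finally show ?thesis .
  qed
  have iA: "integrable M (indicator A :: 'a \<Rightarrow> real)"
    using A emeasure_finite[of A] by (intro integrable_real_indicator) (auto simp: less_top[symmetric])
  have intA: "integral\<^sup>L M (indicator A :: 'a \<Rightarrow> real) = p"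
    unfolding p_def using A by (simp add: Int_absorb1 sets.sets_into_space)
  have intg: "integral\<^sup>L M g = 0"
  proof -
    have "integral\<^sup>L M g = integral\<^sup>L M (indicator A) - integral\<^sup>L M (\<lambda>_. p)"
      unfolding g_def by (rule Bochner_Integration.integral_diff) (auto intro: iA)
    then show ?thesis using intA by (simp add: prob_space)
  qed
  have g2e: "(g x)^2 = indicator A x * (1 - 2*p) + p^2" for x
    unfolding g_def by (auto simp: indicator_def power2_eq_square algebra_simps)
  have g2: "integral\<^sup>L M (\<lambda>x. (g x)^2) = p - p^2"
  proof -
    have "integral\<^sup>L M (\<lambda>x. (g x)^2) = integral\<^sup>L M (\<lambda>x. indicator A x * (1 - 2*p)) + integral\<^sup>L M (\<lambda>_. p^2)"
      unfolding g2e by (rule Bochner_Integration.integral_add) (auto intro: iA)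
    moreover have "integral\<^sup>L M (\<lambda>x. indicator A x * (1 - 2*p)) = p * (1 - 2*p)"
      unfolding integral_mult_left_zero intA by (rule refl)
    moreover have "integral\<^sup>L M (\<lambda>_. p^2) = p^2" by (simp add: prob_space)
    ultimately have "integral\<^sup>L M (\<lambda>x. (g x)^2) = p * (1 - 2*p) + p^2" by (simp only:)
    also have "\<dots> = p - p^2" by (simp add: power2_eq_square algebra_simps)
    finally show ?thesis .
  qed
  define c where "c = p - p^2"
  have cpos: "c > 0" using A unfolding c_def p_def by (simp add: power2_eq_square)
  define f where "f x = complex_of_real (g x)" for x
  have fm: "f \<in> borel_measurable M" unfolding f_def using gm by simp
  have g2m: "(\<lambda>x. (g x)^2) \<in> borel_measurable M" using gm by simp
  have g2b: "\<bar>(g x)^2\<bar> \<le> 1" for x using gb[of x] by (simp add: abs_square_le_1)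
  have L2f: "L2fun M f"
    unfolding L2fun_def f_def using gm bint[OF g2m g2b] by simp
  define D where "D m = (LINT x|M. (g((T^^m) x) - g x)^2)" for m
  have De: "D m = 2 * c - 2 * \<rho> m" for m
  proof -
    have e: "(g((T^^m) x) - g x)^2 = (g((T^^m) x))^2 - 2 * (g((T^^m) x) * g x) + (g x)^2" for x
      by (simp add: power2_eq_square algebra_simps)
    have i1: "integrable M (\<lambda>x. (g((T^^m) x))^2)"
      using bint[of "\<lambda>x. (g((T^^m) x))^2"] gTm[of m] gb by (simp add: abs_square_le_1)
    have i2: "integrable M (\<lambda>x. (g x)^2)" using bint[OF g2m g2b] .
    have "D m = (LINT x|M. (g((T^^m) x))^2) - 2 * \<rho> m + (LINT x|M. (g x)^2)"
    proof -
      have i3: "integrable M (\<lambda>x. 2 * (g((T^^m) x) * g x))"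
        using int_prod[of m] by (rule integrable_mult_right)
      have i4: "integrable M (\<lambda>x. (g((T^^m) x))^2 - 2 * (g((T^^m) x) * g x))"
        using i1 i3 by (rule Bochner_Integration.integrable_diff)
      have "D m = (LINT x|M. (g((T^^m) x))^2 - 2 * (g((T^^m) x) * g x)) + (LINT x|M. (g x)^2)"
        unfolding D_def e using i4 i2 by (rule Bochner_Integration.integral_add)
      also have "(LINT x|M. (g((T^^m) x))^2 - 2 * (g((T^^m) x) * g x)) =
          (LINT x|M. (g((T^^m) x))^2) - (LINT x|M. 2 * (g((T^^m) x) * g x))"
        using i1 i3 by (rule Bochner_Integration.integral_diff)
      also have "(LINT x|M. 2 * (g((T^^m) x) * g x)) = 2 * \<rho> m"
        unfolding \<rho>_def by (rule integral_mult_right_zero)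
      finally show ?thesis .
    qed
    also have "(LINT x|M. (g((T^^m) x))^2) = (LINT x|M. (g x)^2)"
      using intT[OF g2m] .
    finally show ?thesis using g2 unfolding c_def by simp
  qed
  have Dnn: "D m \<ge> 0" for m unfolding D_def by simp
  have rig: "(\<lambda>n. sqrt (D (r n))) \<longlonglongrightarrow> 0"
  proof -
    have "(\<lambda>n. L2norm M (\<lambda>x. f ((T ^^ r n) x) - f x)) \<longlonglongrightarrow> 0"
      using assms(5) L2f unfolding rigid_along_def by blast
    moreover have "L2norm M (\<lambda>x. f ((T ^^ m) x) - f x) = sqrt (D m)" for m
    proof -
      have "cmod (f ((T ^^ m) x) - f x) = \<bar>g((T^^m) x) - g x\<bar>" for x
        unfolding f_def by (metis norm_of_real of_real_diff)
      then show ?thesis unfolding L2norm_def D_def by simp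
    qed
    ultimately show ?thesis by simp
  qed
  have Dlim: "(\<lambda>n. D (r n)) \<longlonglongrightarrow> 0"
  proof -
    have "(\<lambda>n. (sqrt (D (r n)))^2) \<longlonglongrightarrow> 0^2" by (intro tendsto_power rig)
    then show ?thesis using Dnn by simp
  qed
  have \<rho>lim: "(\<lambda>n. \<rho> (r n)) \<longlonglongrightarrow> c"
  proof -
    have "(\<lambda>n. c - D (r n) / 2) \<longlonglongrightarrow> c - 0 / 2"
      by (intro tendsto_intros Dlim) auto
    moreover have "c - D (r n) / 2 = \<rho> (r n)" for n using De[of "r n"] by linarith
    ultimately show ?thesis by simp
  qed
  define a where "a n = complex_of_real (\<rho> n)" for n
  have wm: "(\<lambda>N. (\<Sum>n<N. \<bar>\<rho> n\<bar>) / real N) \<longlonglongrightarrow> 0"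
  proof -
    have lim: "(\<lambda>N. (\<Sum>n<N. cmod ((LINT x|M. f ((T ^^ n) x) * cnj (f x))
                              - (LINT x|M. f x) * cnj (LINT x|M. f x))) / real N) \<longlonglongrightarrow> 0"
      using assms(4) L2f unfolding weakly_mixing_def by blast
    have "(LINT x|M. f x) = 0" unfolding f_def using intg by simp
    moreover have "(LINT x|M. f ((T ^^ n) x) * cnj (f x)) = complex_of_real (\<rho> n)" for n
      unfolding f_def \<rho>_def by (simp flip: integral_complex_of_real)
    ultimately show ?thesis using lim by simp
  qed
  have ns: "null_seq a"
  proof -
    have le: "(\<Sum>n=1..N. \<bar>\<rho> n\<bar>) / real N \<le> (\<Sum>n<N. \<bar>\<rho> n\<bar>) / real N + 1 / real N" for N
    proof -
      have "(\<Sum>n=1..N. \<bar>\<rho> n\<bar>) \<le> (\<Sum>n<Suc N. \<bar>\<rho> n\<bar>)"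
        by (rule sum_mono2) auto
      also have "\<dots> \<le> (\<Sum>n<N. \<bar>\<rho> n\<bar>) + 1" using \<rho>b[of N] by simp
      finally have "(\<Sum>n=1..N. \<bar>\<rho> n\<bar>) / real N \<le> ((\<Sum>n<N. \<bar>\<rho> n\<bar>) + 1) / real N"
        by (rule divide_right_mono) simp
      then show ?thesis by (simp only: add_divide_distrib)
    qed
    have ge: "0 \<le> (\<Sum>n=1..N. \<bar>\<rho> n\<bar>) / real N" for N
      by (intro divide_nonneg_nonneg sum_nonneg) auto
    have h: "(\<lambda>N. (\<Sum>n<N. \<bar>\<rho> n\<bar>) / real N + 1 / real N) \<longlonglongrightarrow> 0 + 0"
      by (intro tendsto_add wm lim_1_over_n)
    have "(\<lambda>N. (\<Sum>n=1..N. \<bar>\<rho> n\<bar>) / real N) \<longlonglongrightarrow> 0"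
      by (rule tendsto_sandwich[OF always_eventually always_eventually tendsto_const])
         (use ge le h in auto)
    moreover have "(\<lambda>N. (\<Sum>n=1..N. cmod (a n)) / real N) = (\<lambda>N. (\<Sum>n=1..N. \<bar>\<rho> n\<bar>) / real N)"
      unfolding a_def norm_of_real by (rule refl)
    ultimately show ?thesis unfolding null_seq_def by simp
  qed
  have nna: "\<not> null_along r a"
  proof
    assume "null_along r a"
    then have L: "(\<lambda>N. (\<Sum>n=1..N. \<bar>\<rho> (r n)\<bar>) / real N) \<longlonglongrightarrow> 0"
      unfolding null_along_def a_def by simp
    have "eventually (\<lambda>n. \<rho> (r n) > c/2) sequentially"
      using order_tendstoD(1)[OF \<rho>lim, of "c/2"] cpos by simp
    then obtain N0 where N0: "\<And>n. n \<ge> N0 \<Longrightarrow> \<rho> (r n) > c/2"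
      unfolding eventually_sequentially by auto
    have "eventually (\<lambda>N. (\<Sum>n=1..N. \<bar>\<rho> (r n)\<bar>) / real N < c/4) sequentially"
      using order_tendstoD(2)[OF L, of "c/4"] cpos by simp
    then obtain N1 where N1: "\<And>N. N \<ge> N1 \<Longrightarrow> (\<Sum>n=1..N. \<bar>\<rho> (r n)\<bar>) / real N < c/4"
      unfolding eventually_sequentially by auto
    define N where "N = max N1 (2 * N0 + 2)"
    have NN: "N \<ge> N1" "N \<ge> 2 * N0 + 2" unfolding N_def by auto
    have "(\<Sum>n\<in>{N0+1..N}. c/2) \<le> (\<Sum>n\<in>{N0+1..N}. \<bar>\<rho> (r n)\<bar>)"
    proof (rule sum_mono)
      fix n assume "n \<in> {N0+1..N}"
      then have "n \<ge> N0" by simp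
      then have "\<rho> (r n) > c/2" by (rule N0)
      then show "c/2 \<le> \<bar>\<rho> (r n)\<bar>" by simp
    qed
    also have "\<dots> \<le> (\<Sum>n=1..N. \<bar>\<rho> (r n)\<bar>)"
      by (rule sum_mono2) auto
    finally have s: "real (N - N0) * (c/2) \<le> (\<Sum>n=1..N. \<bar>\<rho> (r n)\<bar>)" by simp
    have "real N * (c/4) \<le> real (N - N0) * (c/2)"
      using NN cpos by (simp add: of_nat_diff)
    with s have "real N * (c/4) \<le> (\<Sum>n=1..N. \<bar>\<rho> (r n)\<bar>)" by linarith
    moreover have "real N > 0" using NN by simp
    ultimately have "c/4 \<le> (\<Sum>n=1..N. \<bar>\<rho> (r n)\<bar>) / real N"
      by (simp add: field_simps)
    with N1[OF NN(1)] show False by simp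
  qed
  have lc: "linear_correlation M T a"
    unfolding linear_correlation_def
  proof (intro exI[where x="1::nat"] exI[where x="\<lambda>_::nat. f"] exI[where x="\<lambda>j::nat. if j = 0 then (0::int) else 1"] conjI allI impI)
    fix j :: nat
    show "Linfty_fun M f"
      unfolding Linfty_fun_def using fm gb by (auto simp: f_def intro!: exI[of _ 1])
  next
    fix n :: nat
    show "a n = (LINT x|M. (\<Prod>j\<le>(1::nat). f (tpow (space M) T ((if j = 0 then 0 else 1) * int n) x)))"
    proof -
      have "(LINT x|M. (\<Prod>j\<le>(1::nat). f (tpow (space M) T ((if j = 0 then 0 else 1) * int n) x)))
          = (LINT x|M. complex_of_real (g((T^^n) x) * g x))"
        by (rule Bochner_Integration.integral_cong) (simp_all add: prod_atMost_1 tpow_def f_def mult.commute)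
      then show ?thesis unfolding a_def \<rho>_def integral_complex_of_real by simp
    qed
  qed
  have "\<forall>n. a n = (\<lambda>_. 0) n + a n" by simp
  then show ?thesis using assms(2) lc nilsequence_zero ns nna by blast
qed

end
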